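(* Let $M\in\mathbb{N}$ and $t\ge 0$. Let $\nu\in\mathbb{C}\setminus\{0\}$ with $\mathrm{Re}(\nu)>0$, let $\delta_1,\dots,\delta_M\in\mathbb{C}\setminus\{0\}$ with $\mathrm{Re}(\delta_i)>0$, and let $\eta_1,\dots,\eta_M\in\mathbb{C}$ be pairwise distinct. Then $$\Bigl(x^{\delta_1-1}E_{\nu,\delta_1}(\eta_1x^\nu)\ast\cdots\ast x^{\delta_M-1}E_{\nu,\delta_M}(\eta_Mx^\nu)\Bigr)(t)=t^{\sum_{h=1}^M\delta_h-1}\sum_{i=1}^M\frac{\eta_i^{M-1}}{\prod_{j=1,\,j\neq i}^M(\eta_i-\eta_j)}\,E_{\nu,\sum_{h=1}^M\delta_h}\bigl(\eta_it^\nu\bigr),$$ where the convolution is performed with respect to the variable $x\ge0$.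
   Context: The two-parameter Mittag-Leffler function is $E_{\nu,\delta}(x)=\sum_{k=0}^\infty\frac{x^k}{\Gamma(\nu k+\delta)}$. The convolution of functions on $[0,\infty)$ is $(f\ast g)(t)=\int_0^t f(t-x)g(x)\,dx$. An empty product equals $1$. *)

theory Defs
  imports "HOL-Analysis.Analysis"
begin

definition mittag_leffler :: "complex \<Rightarrow> complex \<Rightarrow> complex \<Rightarrow> complex" where
  "mittag_leffler \<nu> \<delta> z = (\<Sum>k. z ^ k / Gamma (\<nu> * of_nat k + \<delta>))"

definition conv :: "(real \<Rightarrow> complex) \<Rightarrow> (real \<Rightarrow> complex) \<Rightarrow> real \<Rightarrow> complex" where
  "conv f g t = integral {0..t} (\<lambda>x. f (t - x) * g x)"

fun conv_iter :: "(nat \<Rightarrow> real \<Rightarrow> complex) \<Rightarrow> nat \<Rightarrow> real \<Rightarrow> complex" where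
  "conv_iter F 0 = (\<lambda>t. 0)"
| "conv_iter F (Suc 0) = F 1"
| "conv_iter F (Suc (Suc n)) = conv (conv_iter F (Suc n)) (F (Suc (Suc n)))"

end

theory Submission
  imports Defs "HOL-Complex_Analysis.Complex_Analysis" "HOL-Real_Asymp.Real_Asymp"
begin

definition gpow :: "complex \<Rightarrow> real \<Rightarrow> complex" where
  "gpow a t = (if 0 < t then of_real t powr (a - 1) * of_real (exp (-t)) else 0)"

lemma gpow_meas [measurable]: "gpow a \<in> borel_measurable borel"
  unfolding gpow_def by measurable

lemma gpow_alt: "gpow a = (\<lambda>t. indicator {0<..} t *\<^sub>R (of_real t powr (a - 1) / of_real (exp t)))"
  by (auto simp: gpow_def fun_eq_iff indicator_def exp_minus field_simps)

lemma gpow_integrable: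
  assumes "Re a > 0"
  shows "integrable lborel (gpow a)" "integral\<^sup>L lborel (gpow a) = Gamma a"
proof -
  have "set_integrable lebesgue {0<..} (\<lambda>t. of_real t powr (a - 1) / of_real (exp t))"
    using absolutely_integrable_Gamma_integral'[OF assms] .
  hence "integrable lebesgue (gpow a)" by (simp add: set_integrable_def gpow_alt)
  thus 1: "integrable lborel (gpow a)" by (subst (asm) integrable_completion) auto
  hence "set_integrable lborel {0<..} (\<lambda>t. of_real t powr (a - 1) / of_real (exp t))"
    by (simp add: set_integrable_def gpow_alt)
  from set_borel_integral_eq_integral(2)[OF this]
  have "integral\<^sup>L lborel (gpow a) = integral {0<..} (\<lambda>t. of_real t powr (a - 1) / of_real (exp t))"
    by (simp add: set_lebesgue_integral_def gpow_alt)
  also have "\<dots> = Gamma a" using Gamma_integral_complex'[OF assms] by (simp add: integral_unique)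
  finally show "integral\<^sup>L lborel (gpow a) = Gamma a" .
qed

lemma norm_gpow: "norm (gpow a t) = Re (gpow (of_real (Re a)) t)"
proof -
  have e: "complex_of_real (Re a) - 1 = of_real (Re a - 1)" by simp
  have "0 < t \<Longrightarrow> Re (complex_of_real t powr (complex_of_real (Re a) - 1)) = t powr (Re a - 1)"
    unfolding e by (subst powr_of_real) auto
  thus ?thesis
    by (auto simp: gpow_def norm_mult norm_powr_real_powr)
qed

definition bint :: "complex \<Rightarrow> complex \<Rightarrow> real \<Rightarrow> complex" where
  "bint a b u = (\<integral>x. indicator {0<..<u} x *\<^sub>R (of_real (u - x) powr (a - 1) * of_real x powr (b - 1)) \<partial>lborel)"

lemma bint_scale:
  assumes "u > 0"
  shows "bint a b u = of_real u powr (a + b - 1) * bint a b 1"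
proof -
  let ?f = "\<lambda>x. indicator {0<..<u} x *\<^sub>R (of_real (u - x) powr (a - 1) * of_real x powr (b - 1) :: complex)"
  let ?g = "\<lambda>x. indicator {0<..<1} x *\<^sub>R (of_real (1 - x) powr (a - 1) * of_real x powr (b - 1) :: complex)"
  have "bint a b u = \<bar>u\<bar> *\<^sub>R (\<integral>x. ?f (0 + u * x) \<partial>lborel)"
    unfolding bint_def by (rule lborel_integral_real_affine) (use assms in auto)
  also have "(\<lambda>x. ?f (0 + u * x)) = (\<lambda>x. of_real u powr (a + b - 2) * ?g x)"
  proof
    fix x :: real
    show "?f (0 + u * x) = of_real u powr (a + b - 2) * ?g x"
    proof (cases "0 < x \<and> x < 1")
      case True
      have "of_real (u - u * x) = (of_real u * of_real (1 - x) :: complex)" by (simp add: algebra_simps)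
      hence e1: "(of_real (u - u * x) :: complex) powr (a - 1) = of_real u powr (a - 1) * of_real (1 - x) powr (a - 1)"
        using True assms by (simp add: powr_times_real)
      have e2: "(of_real (u * x) :: complex) powr (b - 1) = of_real u powr (b - 1) * of_real x powr (b - 1)"
        using True assms by (simp add: powr_times_real)
      have e3: "(of_real u :: complex) powr (a - 1) * of_real u powr (b - 1) = of_real u powr (a + b - 2)"
        by (simp add: powr_add[symmetric])
      have "u * x < u" using True assms by simp
      hence lhs: "?f (0 + u * x) = of_real (u - u * x) powr (a - 1) * of_real (u * x) powr (b - 1)"
        using True assms by (simp add: indicator_def zero_less_mult_iff del: of_real_mult of_real_diff)
      have rhs: "?g x = of_real (1 - x) powr (a - 1) * of_real x powr (b - 1)"
        using True by (simp add: indicator_def del: of_real_diff)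
      show ?thesis unfolding lhs rhs e1 e2 e3[symmetric] by (simp only: mult_ac)
    next
      case False
      hence "\<not> (0 < u * x \<and> u * x < u)" using assms
        by (auto simp: zero_less_mult_iff)
      thus ?thesis using False unfolding indicator_def by auto
    qed
  qed
  also have "(\<integral>x. of_real u powr (a + b - 2) * ?g x \<partial>lborel) = of_real u powr (a + b - 2) * bint a b 1"
    unfolding bint_def by (rule integral_mult_right_zero)
  also have "\<bar>u\<bar> *\<^sub>R (of_real u powr (a + b - 2) * bint a b 1) = (of_real u * of_real u powr (a + b - 2)) * bint a b 1"
    using assms by (simp add: scaleR_conv_of_real)
  also have "of_real u * of_real u powr (a + b - 2) = (of_real u powr (a + b - 1) :: complex)"
  proof -
    have "(of_real u :: complex) powr (a + b - 1) = of_real u powr (1 + (a + b - 2))" by (simp add: algebra_simps)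
    also have "\<dots> = of_real u powr 1 * of_real u powr (a + b - 2)" by (rule powr_add)
    finally show ?thesis using assms by simp
  qed
  finally show ?thesis .
qed

lemma lborel_shift:
  fixes g :: "real \<Rightarrow> 'a::{banach, second_countable_topology}"
  shows "(\<integral>u. g (u - t) \<partial>lborel) = (\<integral>u. g u \<partial>lborel)"
    and "integrable lborel (\<lambda>u. g (u - t)) \<longleftrightarrow> integrable lborel g"
proof -
  have e: "(\<lambda>x. g (- t + 1 * x)) = (\<lambda>u. g (u - t))" by auto
  show "(\<integral>u. g (u - t) \<partial>lborel) = (\<integral>u. g u \<partial>lborel)"
    using lborel_integral_real_affine[of 1 g "-t"] unfolding e by simp
  show "integrable lborel (\<lambda>u. g (u - t)) \<longleftrightarrow> integrable lborel g"
    using lborel_integrable_real_affine_iff[of 1 g "-t"] unfolding e by simp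
qed

lemma bint_Beta_aux:
  assumes a: "Re a > 0" and b: "Re b > 0"
  shows "Gamma a * Gamma b = Gamma (a + b) * bint b a 1"
proof -
  define f where "f = (\<lambda>t u. gpow a t * gpow b (u - t))"
  note ia = gpow_integrable[OF a] and ib = gpow_integrable[OF b]
  have iab: "integrable lborel (gpow (a + b))" "integral\<^sup>L lborel (gpow (a + b)) = Gamma (a + b)"
    using gpow_integrable[of "a + b"] a b by auto
  have ibs: "integrable lborel (\<lambda>u. gpow b (u - t))" for t
    using ib(1) lborel_shift(2)[of "gpow b" t] by simp
  have int2: "integrable (lborel \<Otimes>\<^sub>M lborel) (case_prod f)"
  proof (rule lborel_pair.Fubini_integrable)
    show "case_prod f \<in> borel_measurable (lborel \<Otimes>\<^sub>M lborel)"
      unfolding f_def by measurable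
    have "(\<lambda>t. \<integral>u. norm (case_prod f (t, u)) \<partial>lborel) = (\<lambda>t. norm (gpow a t) * (\<integral>u. norm (gpow b u) \<partial>lborel))"
    proof
      fix t
      have "(\<integral>u. norm (case_prod f (t, u)) \<partial>lborel) = (\<integral>u. norm (gpow a t) * norm (gpow b (u - t)) \<partial>lborel)"
        by (simp add: f_def norm_mult)
      also have "\<dots> = norm (gpow a t) * (\<integral>u. norm (gpow b (u - t)) \<partial>lborel)"
        by (rule integral_mult_right_zero)
      also have "(\<integral>u. norm (gpow b (u - t)) \<partial>lborel) = (\<integral>u. norm (gpow b u) \<partial>lborel)"
        by (rule lborel_shift(1))
      finally show "(\<integral>u. norm (case_prod f (t, u)) \<partial>lborel) = norm (gpow a t) * (\<integral>u. norm (gpow b u) \<partial>lborel)" .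
    qed
    moreover have "integrable lborel (\<lambda>t. norm (gpow a t) * (\<integral>u. norm (gpow b u) \<partial>lborel))"
      by (intro integrable_mult_left integrable_norm ia(1))
    ultimately show "integrable lborel (\<lambda>t. \<integral>u. norm (case_prod f (t, u)) \<partial>lborel)" by simp
    show "AE t in lborel. integrable lborel (\<lambda>u. case_prod f (t, u))"
      by (intro AE_I2) (auto simp: f_def intro!: integrable_mult_right ibs)
  qed
  have fub: "(\<integral>u. (\<integral>t. f t u \<partial>lborel) \<partial>lborel) = (\<integral>t. (\<integral>u. f t u \<partial>lborel) \<partial>lborel)"
    by (rule lborel_pair.Fubini_integral[OF int2])
  have "(\<integral>t. (\<integral>u. f t u \<partial>lborel) \<partial>lborel) = (\<integral>t. gpow a t * Gamma b \<partial>lborel)"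
  proof (rule Bochner_Integration.integral_cong[OF refl])
    fix t
    have "(\<integral>u. f t u \<partial>lborel) = gpow a t * (\<integral>u. gpow b (u - t) \<partial>lborel)"
      unfolding f_def by (rule integral_mult_right_zero)
    also have "\<dots> = gpow a t * Gamma b" using lborel_shift(1)[of "gpow b" t] ib(2) by simp
    finally show "(\<integral>u. f t u \<partial>lborel) = gpow a t * Gamma b" .
  qed
  also have "\<dots> = Gamma a * Gamma b" using ia(2) by simp
  finally have lhs: "(\<integral>t. (\<integral>u. f t u \<partial>lborel) \<partial>lborel) = Gamma a * Gamma b" .
  have inner: "(\<integral>t. f t u \<partial>lborel) = gpow (a + b) u * bint b a 1" for u
  proof (cases "u > 0")
    case False
    have "f t u = 0" for t using False by (auto simp: f_def gpow_def)
    thus ?thesis using False by (simp add: gpow_def)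
  next
    case True
    have "f t u = of_real (exp (-u)) * (indicator {0<..<u} t *\<^sub>R (of_real (u - t) powr (b - 1) * of_real t powr (a - 1)))" for t
    proof (cases "0 < t \<and> t < u")
      case True
      have "exp (- t) * exp (- (u - t)) = exp (-u)" by (simp add: exp_add[symmetric])
      hence "(of_real (exp (- t)) :: complex) * of_real (exp (- (u - t))) = of_real (exp (-u))"
        by (metis of_real_mult)
      thus ?thesis using True unfolding f_def gpow_def indicator_def
        by (auto simp: mult_ac simp del: of_real_mult of_real_diff of_real_minus)
    next
      case False
      thus ?thesis unfolding f_def gpow_def indicator_def by auto
    qed
    hence "(\<integral>t. f t u \<partial>lborel) = of_real (exp (-u)) * bint b a u"
      unfolding bint_def by (simp only: integral_mult_right_zero)
    also have "\<dots> = of_real (exp (-u)) * (of_real u powr (a + b - 1) * bint b a 1)"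
      using bint_scale[OF True, of b a] by (simp add: add.commute)
    also have "\<dots> = gpow (a + b) u * bint b a 1" using True by (simp add: gpow_def mult_ac)
    finally show ?thesis .
  qed
  have "(\<integral>u. (\<integral>t. f t u \<partial>lborel) \<partial>lborel) = (\<integral>u. gpow (a + b) u * bint b a 1 \<partial>lborel)"
    by (simp add: inner)
  also have "\<dots> = Gamma (a + b) * bint b a 1" using iab(2) by simp
  finally show ?thesis using fub lhs by simp
qed

lemma Gamma_Re_pos_nz: "Re z > 0 \<Longrightarrow> Gamma z \<noteq> (0::complex)"
  by (auto simp: Gamma_eq_zero_iff elim!: nonpos_Ints_cases)

lemma bint_Beta:
  assumes a: "Re a > 0" and b: "Re b > 0" and u: "u > 0"
  shows "bint a b u = of_real u powr (a + b - 1) * Beta a b"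
    and "integrable lborel (\<lambda>x. indicator {0<..<u} x *\<^sub>R (of_real (u - x) powr (a - 1) * of_real x powr (b - 1)))"
proof -
  have "Gamma b * Gamma a = Gamma (b + a) * bint a b 1" by (rule bint_Beta_aux[OF b a])
  moreover have "Gamma (a + b) \<noteq> 0" using a b by (intro Gamma_Re_pos_nz) simp
  ultimately have B1: "bint a b 1 = Beta a b" by (simp add: Beta_def field_simps add.commute)
  show 1: "bint a b u = of_real u powr (a + b - 1) * Beta a b"
    using bint_scale[OF u] B1 by simp
  have "Beta a b \<noteq> 0" using a b Gamma_Re_pos_nz[of a] Gamma_Re_pos_nz[of b] Gamma_Re_pos_nz[of "a+b"]
    by (simp add: Beta_def)
  moreover have "(of_real u :: complex) powr (a + b - 1) \<noteq> 0" using u by simp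
  ultimately have "bint a b u \<noteq> 0" using 1 by simp
  thus "integrable lborel (\<lambda>x. indicator {0<..<u} x *\<^sub>R (of_real (u - x) powr (a - 1) * of_real x powr (b - 1)))"
    unfolding bint_def using not_integrable_integral_eq by blast
qed

lemma norm_Beta_le:
  assumes a: "Re a > 0" and b: "Re b > 0"
  shows "norm (Beta a b) \<le> Beta (Re a) (Re b)"
proof -
  define a' b' where "a' = complex_of_real (Re a)" and "b' = complex_of_real (Re b)"
  have a': "Re a' > 0" and b': "Re b' > 0" using a b by (auto simp: a'_def b'_def)
  let ?h = "\<lambda>x. indicator {0<..<1} x *\<^sub>R (of_real (1 - x) powr (a' - 1) * of_real x powr (b' - 1) :: complex)"
  have nh: "norm (indicator {0<..<1} x *\<^sub>R (of_real (1 - x) powr (a - 1) * of_real x powr (b - 1) :: complex)) = Re (?h x)" for x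
  proof (cases "0 < x \<and> x < 1")
    case True
    have e1: "a' - 1 = of_real (Re a - 1)" "b' - 1 = of_real (Re b - 1)" by (auto simp: a'_def b'_def)
    have "Re (?h x) = (1 - x) powr (Re a - 1) * x powr (Re b - 1)"
      using True unfolding e1 by (simp add: indicator_def powr_of_real del: of_real_diff)
    thus ?thesis using True by (simp add: norm_mult norm_powr_real_powr indicator_def del: of_real_diff)
  qed (auto simp: indicator_def)
  have "norm (Beta a b) = norm (bint a b 1)" using bint_Beta(1)[OF a b, of 1] by simp
  also have "\<dots> \<le> (\<integral>x. norm (indicator {0<..<1} x *\<^sub>R (of_real (1 - x) powr (a - 1) * of_real x powr (b - 1) :: complex)) \<partial>lborel)"
    unfolding bint_def by (rule integral_norm_bound)
  also have "\<dots> = (\<integral>x. Re (?h x) \<partial>lborel)" by (simp only: nh)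
  also have "\<dots> = Re (bint a' b' 1)" unfolding bint_def
    using integral_Re[OF bint_Beta(2)[OF a' b', of 1]] by simp
  also have "\<dots> = Beta (Re a) (Re b)" using bint_Beta(1)[OF a' b', of 1]
    by (simp add: a'_def b'_def Beta_complex_of_real)
  finally show ?thesis .
qed

lemma Beta_real_bound:
  fixes x c :: real
  assumes x: "x > 1" and c: "0 < c" "c \<le> 1"
  shows "Beta x c \<le> Gamma c * (x + c - 1) powr (-c)"
proof -
  let ?f = "ln \<circ> Gamma :: real \<Rightarrow> real"
  have "?f ((1 - (1 - c)) *\<^sub>R (x + c - 1) + (1 - c) *\<^sub>R (x + c)) \<le> (1 - (1 - c)) * ?f (x + c - 1) + (1 - c) * ?f (x + c)"
    by (rule convex_onD[OF log_convex_Gamma_real]) (use x c in auto)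
  moreover have "(1 - (1 - c)) *\<^sub>R (x + c - 1) + (1 - c) *\<^sub>R (x + c) = x" by (simp add: algebra_simps)
  ultimately have 1: "ln (Gamma x) \<le> c * ln (Gamma (x + c - 1)) + (1 - c) * ln (Gamma (x + c))" by simp
  have "Gamma ((x + c - 1) + 1) = (x + c - 1) * Gamma (x + c - 1)"
    by (rule Gamma_plus1) (use x c in \<open>auto elim!: nonpos_Ints_cases\<close>)
  hence eq: "Gamma (x + c) = (x + c - 1) * Gamma (x + c - 1)" by simp
  have g: "Gamma (x + c - 1) > 0" using x c by (intro Gamma_real_pos) simp
  have "ln (Gamma (x + c)) = ln ((x + c - 1) * Gamma (x + c - 1))" by (simp only: eq)
  also have "\<dots> = ln (x + c - 1) + ln (Gamma (x + c - 1))"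
    by (rule ln_mult_pos) (use x c g in auto)
  finally have "ln (Gamma (x + c)) = ln (x + c - 1) + ln (Gamma (x + c - 1))" .
  with 1 have "ln (Gamma x) \<le> ln (Gamma (x + c)) - c * ln (x + c - 1)" by (simp add: algebra_simps)
  hence "exp (ln (Gamma x)) \<le> exp (ln (Gamma (x + c)) - c * ln (x + c - 1))" by simp
  hence "Gamma x \<le> Gamma (x + c) * (x + c - 1) powr (-c)"
    using x c by (simp add: exp_diff powr_def divide_inverse exp_minus)
  hence "Gamma x * Gamma c / Gamma (x + c) \<le> Gamma c * (x + c - 1) powr (-c)"
    using x c by (simp add: field_simps)
  thus ?thesis by (simp add: Beta_def)
qed

lemma Beta_tendsto_0:
  fixes c \<alpha> d :: real
  assumes c: "c > 0" and \<alpha>: "\<alpha> > 0"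
  shows "(\<lambda>n. Beta (\<alpha> * real n + d) c) \<longlonglongrightarrow> 0"
proof (rule tendsto_sandwich)
  define c' where "c' = min c 1"
  have c': "0 < c'" "c' \<le> 1" "c' \<le> c" using c by (auto simp: c'_def)
  have ev: "eventually (\<lambda>n. \<alpha> * real n + d > 1) sequentially" using \<alpha> by real_asymp
  show "eventually (\<lambda>n. 0 \<le> Beta (\<alpha> * real n + d) c) sequentially"
    using ev by eventually_elim (use c in \<open>auto simp: Beta_def\<close>)
  show "eventually (\<lambda>n. Beta (\<alpha> * real n + d) c \<le> Gamma c' * (\<alpha> * real n + d + c' - 1) powr (-c')) sequentially"
    using ev
  proof eventually_elim
    case (elim n)
    have "Beta (\<alpha> * real n + d) c \<le> Beta (\<alpha> * real n + d) c'"
      by (rule Beta_real_mono) (use elim c' in auto)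
    also have "\<dots> \<le> Gamma c' * (\<alpha> * real n + d + c' - 1) powr (-c')"
      by (rule Beta_real_bound) (use elim c' in auto)
    finally show ?case .
  qed
  show "(\<lambda>n. Gamma c' * (\<alpha> * real n + d + c' - 1) powr (-c')) \<longlonglongrightarrow> 0"
    using c' \<alpha> by real_asymp
qed auto

lemma Gamma_step:
  assumes a: "Re a > 0" and v: "Re v > 0"
  shows "norm (Gamma (a + v)) = norm (Gamma a) * norm (Gamma v) / norm (Beta a v)"
proof -
  have g: "Gamma (a + v) \<noteq> 0" "Gamma a \<noteq> 0" "Gamma v \<noteq> 0"
    using a v by (auto intro!: Gamma_Re_pos_nz)
  thus ?thesis by (simp add: Beta_def norm_divide norm_mult)
qed

lemma ml_summable_base:
  fixes v d :: complex and W :: real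
  assumes v: "Re v > 0" and d: "Re d > 0" and W: "W \<ge> 0"
  shows "summable (\<lambda>n. W ^ n / norm (Gamma (v * of_nat n + d)))"
proof -
  have gv: "norm (Gamma v) > 0" using Gamma_Re_pos_nz[OF v] by simp
  have "(\<lambda>n. W * Beta (Re v * real n + Re d) (Re v) / norm (Gamma v)) \<longlonglongrightarrow> W * 0 / norm (Gamma v)"
    using gv by (intro tendsto_intros Beta_tendsto_0 v) auto
  hence "eventually (\<lambda>n. W * Beta (Re v * real n + Re d) (Re v) / norm (Gamma v) < 1/2) sequentially"
    by (intro order_tendstoD(2)) auto
  then obtain N where N: "\<And>n. n \<ge> N \<Longrightarrow> W * Beta (Re v * real n + Re d) (Re v) / norm (Gamma v) < 1/2"
    by (auto simp: eventually_sequentially)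
  show ?thesis
  proof (rule summable_ratio_test[of "1/2" N])
    fix n assume n: "n \<ge> N"
    define a where "a = v * of_nat n + d"
    have a: "Re a > 0" using v d by (simp add: a_def add_nonneg_pos)
    have Rea: "Re a = Re v * real n + Re d" by (simp add: a_def)
    have e: "v * of_nat (Suc n) + d = a + v" by (simp add: a_def algebra_simps)
    have ga: "norm (Gamma a) > 0" using Gamma_Re_pos_nz[OF a] by simp
    have nb: "norm (Beta a v) \<le> Beta (Re v * real n + Re d) (Re v)"
      using norm_Beta_le[OF a v] Rea by simp
    have "norm (W ^ Suc n / norm (Gamma (v * of_nat (Suc n) + d))) = W ^ Suc n * norm (Beta a v) / (norm (Gamma a) * norm (Gamma v))"
      unfolding e Gamma_step[OF a v] using W by simp
    also have "\<dots> \<le> W ^ Suc n * Beta (Re v * real n + Re d) (Re v) / (norm (Gamma a) * norm (Gamma v))"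
      using W ga gv nb by (intro divide_right_mono mult_left_mono) auto
    also have "\<dots> = (W * Beta (Re v * real n + Re d) (Re v) / norm (Gamma v)) * (W ^ n / norm (Gamma a))"
      by (simp add: field_simps)
    also have "\<dots> \<le> 1/2 * (W ^ n / norm (Gamma a))"
      using N[OF n] W ga by (intro mult_right_mono) auto
    also have "\<dots> = 1/2 * norm (W ^ n / norm (Gamma (v * of_nat n + d)))"
      using W by (simp add: a_def)
    finally show "norm (W ^ Suc n / norm (Gamma (v * of_nat (Suc n) + d))) \<le> 1/2 * norm (W ^ n / norm (Gamma (v * of_nat n + d)))" .
  qed simp
qed

definition geom :: "(nat \<Rightarrow> complex) \<Rightarrow> bool" where
  "geom c \<longleftrightarrow> (\<exists>C R. 0 \<le> C \<and> 0 \<le> R \<and> (\<forall>n. norm (c n) \<le> C * R ^ n))"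

lemma ml_summable:
  assumes c: "geom c" and v: "Re v > 0" and d: "Re d > 0"
  shows "summable (\<lambda>n. norm (c n * z ^ n / Gamma (v * of_nat n + d)))"
proof -
  obtain C R where CR: "0 \<le> C" "0 \<le> R" "\<And>n. norm (c n) \<le> C * R ^ n" using c by (auto simp: geom_def)
  have "summable (\<lambda>n. C * ((R * norm z) ^ n / norm (Gamma (v * of_nat n + d))))"
    by (intro summable_mult ml_summable_base v d) (use CR in auto)
  thus ?thesis
  proof (rule summable_comparison_test')
    fix n
    have "norm (c n * z ^ n / Gamma (v * of_nat n + d)) = norm (c n) * norm z ^ n / norm (Gamma (v * of_nat n + d))"
      by (simp add: norm_mult norm_divide norm_power)
    also have "\<dots> \<le> C * R ^ n * norm z ^ n / norm (Gamma (v * of_nat n + d))"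
      by (intro divide_right_mono mult_right_mono CR) auto
    finally show "norm (norm (c n * z ^ n / Gamma (v * of_nat n + d))) \<le> C * ((R * norm z) ^ n / norm (Gamma (v * of_nat n + d)))"
      by (simp add: power_mult_distrib mult_ac)
  qed
qed

definition cauchy :: "(nat \<Rightarrow> complex) \<Rightarrow> (nat \<Rightarrow> complex) \<Rightarrow> nat \<Rightarrow> complex" where
  "cauchy a b n = (\<Sum>k\<le>n. a k * b (n - k))"

lemma geom_cauchy:
  assumes "geom a" "geom b"
  shows "geom (cauchy a b)"
proof -
  obtain C R where CR: "0 \<le> C" "0 \<le> R" "\<And>n. norm (a n) \<le> C * R ^ n" using assms(1) by (auto simp: geom_def)
  obtain C' R' where CR': "0 \<le> C'" "0 \<le> R'" "\<And>n. norm (b n) \<le> C' * R' ^ n" using assms(2) by (auto simp: geom_def)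
  define Q where "Q = max R R'"
  have Q: "R \<le> Q" "R' \<le> Q" "0 \<le> Q" using CR CR' by (auto simp: Q_def)
  have "norm (cauchy a b n) \<le> (C * C') * (2 * Q) ^ n" for n
  proof -
    have "norm (cauchy a b n) \<le> (\<Sum>k\<le>n. norm (a k) * norm (b (n - k)))"
      unfolding cauchy_def by (rule order.trans[OF norm_sum]) (simp add: norm_mult)
    also have "\<dots> \<le> (\<Sum>k\<le>n. (C * Q ^ k) * (C' * Q ^ (n - k)))"
    proof (intro sum_mono mult_mono)
      fix k
      show "norm (a k) \<le> C * Q ^ k" using CR(3)[of k] power_mono[OF Q(1) CR(2), of k] CR(1)
        by (meson mult_left_mono order.trans)
      show "norm (b (n - k)) \<le> C' * Q ^ (n - k)" using CR'(3)[of "n - k"] power_mono[OF Q(2) CR'(2), of "n - k"] CR'(1)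
        by (meson mult_left_mono order.trans)
    qed (use CR CR' Q in auto)
    also have "\<dots> = (\<Sum>k\<le>n. (C * C') * Q ^ n)"
      by (intro sum.cong refl) (simp add: power_add[symmetric] mult_ac)
    also have "\<dots> = (C * C') * (real (Suc n) * Q ^ n)" by simp
    also have "\<dots> \<le> (C * C') * (2 ^ n * Q ^ n)"
    proof -
      have "real (Suc n) \<le> 2 ^ n"
      proof (induction n)
        case (Suc n) thus ?case by simp
      qed simp
      thus ?thesis using CR CR' Q by (intro mult_left_mono mult_right_mono) auto
    qed
    finally show ?thesis by (simp add: power_mult_distrib)
  qed
  thus ?thesis unfolding geom_def using CR CR' Q by (intro exI[of _ "C * C'"] exI[of _ "2 * Q"]) auto
qed

lemma geom_pow: "geom (\<lambda>n. z ^ n)"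
  unfolding geom_def by (intro exI[of _ 1] exI[of _ "norm z"]) (auto simp: norm_power)

definition gml :: "complex \<Rightarrow> complex \<Rightarrow> (nat \<Rightarrow> complex) \<Rightarrow> real \<Rightarrow> complex" where
  "gml v d c x = (\<Sum>n. c n * (of_real x powr v) ^ n / Gamma (v * of_nat n + d))"

lemma mittag_leffler_gml:
  "mittag_leffler v d (e * of_real x powr v) = gml v d (\<lambda>n. e ^ n) x"
  unfolding mittag_leffler_def gml_def by (simp add: power_mult_distrib)

definition kern :: "complex \<Rightarrow> complex \<Rightarrow> real \<Rightarrow> real \<Rightarrow> complex" where
  "kern a b u x = indicator {0<..<u} x *\<^sub>R (of_real (u - x) powr (a - 1) * of_real x powr (b - 1))"

lemma bint_kern: "bint a b u = (\<integral>x. kern a b u x \<partial>lborel)"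
  by (simp add: bint_def kern_def)

lemma kern_integrable:
  assumes "Re a > 0" "Re b > 0" "u > 0"
  shows "integrable lborel (kern a b u)"
  unfolding kern_def by (rule bint_Beta(2)[OF assms])

lemma kern_integral:
  assumes "Re a > 0" "Re b > 0" "u > 0"
  shows "(\<integral>x. kern a b u x \<partial>lborel) = of_real u powr (a + b - 1) * Beta a b"
  using bint_Beta(1)[OF assms] by (simp add: bint_kern)

lemma kern_norm:
  assumes a: "Re a > 0" and b: "Re b > 0" and u: "u > 0"
  shows "integrable lborel (\<lambda>x. norm (kern a b u x))"
    and "(\<integral>x. norm (kern a b u x) \<partial>lborel) = u powr (Re a + Re b - 1) * Beta (Re a) (Re b)"
proof -
  define a' b' where "a' = complex_of_real (Re a)" and "b' = complex_of_real (Re b)"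
  have a': "Re a' > 0" and b': "Re b' > 0" using a b by (auto simp: a'_def b'_def)
  have e1: "a' - 1 = of_real (Re a - 1)" "b' - 1 = of_real (Re b - 1)" by (auto simp: a'_def b'_def)
  have nh: "norm (kern a b u x) = Re (kern a' b' u x)" for x
  proof (cases "0 < x \<and> x < u")
    case True
    have "Re (kern a' b' u x) = (u - x) powr (Re a - 1) * x powr (Re b - 1)"
      using True unfolding e1 kern_def by (simp add: indicator_def powr_of_real del: of_real_diff)
    thus ?thesis using True by (simp add: kern_def norm_mult norm_powr_real_powr indicator_def del: of_real_diff)
  qed (auto simp: indicator_def kern_def)
  show "integrable lborel (\<lambda>x. norm (kern a b u x))"
    unfolding nh by (intro integrable_Re kern_integrable a' b' u)
  have "(\<integral>x. norm (kern a b u x) \<partial>lborel) = (\<integral>x. Re (kern a' b' u x) \<partial>lborel)" by (simp only: nh)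
  also have "\<dots> = Re (\<integral>x. kern a' b' u x \<partial>lborel)"
    by (rule integral_Re[OF kern_integrable[OF a' b' u]])
  also have "\<dots> = Re (of_real u powr (a' + b' - 1) * Beta a' b')" by (simp add: kern_integral[OF a' b' u])
  also have "a' + b' - 1 = of_real (Re a + Re b - 1)" by (simp add: a'_def b'_def)
  also have "Beta a' b' = of_real (Beta (Re a) (Re b))" by (simp add: a'_def b'_def Beta_complex_of_real)
  also have "Re (of_real u powr of_real (Re a + Re b - 1) * of_real (Beta (Re a) (Re b))) = u powr (Re a + Re b - 1) * Beta (Re a) (Re b)"
  proof -
    have "(of_real u :: complex) powr of_real (Re a + Re b - 1) = of_real (u powr (Re a + Re b - 1))"
      by (rule powr_of_real) (use u in simp)
    thus ?thesis by (simp only: of_real_mult[symmetric] Re_complex_of_real)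
  qed
  finally show "(\<integral>x. norm (kern a b u x) \<partial>lborel) = u powr (Re a + Re b - 1) * Beta (Re a) (Re b)" .
qed

lemma term_eq:
  fixes v d c g :: complex
  assumes "s > 0"
  shows "of_real s powr (d - 1) * (c * (of_real s powr v) ^ k / g) = c / g * of_real s powr (v * of_nat k + d - 1)"
proof -
  have "(of_real s powr v) ^ k = (of_real s :: complex) powr (of_nat k * v)"
    using assms by (intro powr_power) simp
  moreover have "(of_real s :: complex) powr (d - 1) * of_real s powr (of_nat k * v) = of_real s powr (v * of_nat k + d - 1)"
    by (simp add: powr_add[symmetric] algebra_simps)
  ultimately show ?thesis by (simp add: field_simps)
qed

lemma gml_expand:
  assumes v: "Re v > 0" and d: "Re d > 0" and c: "geom c" and s: "s > 0"
  shows "of_real s powr (d - 1) * gml v d c s = (\<Sum>k. c k / Gamma (v * of_nat k + d) * of_real s powr (v * of_nat k + d - 1))"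
    and "summable (\<lambda>k. norm (c k / Gamma (v * of_nat k + d) * of_real s powr (v * of_nat k + d - 1)))"
proof -
  have sn: "summable (\<lambda>k. norm (c k * (of_real s powr v) ^ k / Gamma (v * of_nat k + d)))"
    by (rule ml_summable[OF c v d])
  have eq: "of_real s powr (d - 1) * (c k * (of_real s powr v) ^ k / Gamma (v * of_nat k + d)) =
            c k / Gamma (v * of_nat k + d) * of_real s powr (v * of_nat k + d - 1)" for k
    by (rule term_eq[OF s])
  show "of_real s powr (d - 1) * gml v d c s = (\<Sum>k. c k / Gamma (v * of_nat k + d) * of_real s powr (v * of_nat k + d - 1))"
    unfolding eq[symmetric] gml_def by (rule suminf_mult[symmetric]) (rule summable_norm_cancel[OF sn])
  show "summable (\<lambda>k. norm (c k / Gamma (v * of_nat k + d) * of_real s powr (v * of_nat k + d - 1)))"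
    unfolding eq[symmetric] norm_mult by (intro summable_mult sn)
qed

lemma conv_gml:
  assumes v: "Re v > 0" and d1: "Re d1 > 0" and d2: "Re d2 > 0"
    and ga: "geom a" and gb: "geom b" and t: "t > 0"
  defines "F \<equiv> \<lambda>x. of_real x powr (d1 - 1) * gml v d1 a x"
    and "G \<equiv> \<lambda>x. of_real x powr (d2 - 1) * gml v d2 b x"
  shows "integrable lborel (\<lambda>x. indicator {0<..<t} x *\<^sub>R (F (t - x) * G x))"
    and "(\<integral>x. indicator {0<..<t} x *\<^sub>R (F (t - x) * G x) \<partial>lborel) =
           of_real t powr (d1 + d2 - 1) * gml v (d1 + d2) (cauchy a b) t"
proof -
  define \<alpha> where "\<alpha> k = v * of_nat k + d1" for k
  define \<beta> where "\<beta> k = v * of_nat k + d2" for k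
  have Ra: "Re (\<alpha> k) > 0" for k using v d1 by (simp add: \<alpha>_def add_nonneg_pos)
  have Rb: "Re (\<beta> k) > 0" for k using v d2 by (simp add: \<beta>_def add_nonneg_pos)
  define A where "A k s = a k / Gamma (\<alpha> k) * of_real s powr (\<alpha> k - 1)" for k s
  define B where "B k s = b k / Gamma (\<beta> k) * of_real s powr (\<beta> k - 1)" for k s
  have FA: "F s = (\<Sum>k. A k s)" "summable (\<lambda>k. norm (A k s))" if "s > 0" for s
    using gml_expand[OF v d1 ga that] by (simp_all add: F_def A_def \<alpha>_def)
  have GB: "G s = (\<Sum>k. B k s)" "summable (\<lambda>k. norm (B k s))" if "s > 0" for s
    using gml_expand[OF v d2 gb that] by (simp_all add: G_def B_def \<beta>_def)
  define H where "H n x = indicator {0<..<t} x *\<^sub>R (\<Sum>k\<le>n. A k (t - x) * B (n - k) x)" for n x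
  define coef where "coef n k = a k * b (n - k) / (Gamma (\<alpha> k) * Gamma (\<beta> (n - k)))" for n k
  have H_alt: "H n x = (\<Sum>k\<le>n. coef n k * kern (\<alpha> k) (\<beta> (n - k)) t x)" for n x
  proof (cases "0 < x \<and> x < t")
    case True
    thus ?thesis
      apply (simp add: H_def kern_def indicator_def coef_def A_def B_def del: of_real_diff)
      by (intro sum.cong refl) (simp add: mult_ac)
  next
    case False
    hence "indicator {0<..<t} x = (0::real)" by (simp add: indicator_def)
    thus ?thesis by (simp add: H_def kern_def)
  qed
  have Hint: "integrable lborel (H n)" for n
    unfolding H_alt by (intro Bochner_Integration.integrable_sum integrable_mult_right kern_integrable Ra Rb t)
  have Hintegral: "(\<integral>x. H n x \<partial>lborel) = of_real t powr (d1 + d2 - 1) * (cauchy a b n * (of_real t powr v) ^ n / Gamma (v * of_nat n + (d1 + d2)))" for n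
  proof -
    have "(\<integral>x. H n x \<partial>lborel) = (\<Sum>k\<le>n. coef n k * (\<integral>x. kern (\<alpha> k) (\<beta> (n - k)) t x \<partial>lborel))"
      unfolding H_alt
      by (subst Bochner_Integration.integral_sum) (auto intro!: integrable_mult_right kern_integrable Ra Rb t)
    also have "\<dots> = (\<Sum>k\<le>n. a k * b (n - k) * (of_real t powr (d1 + d2 - 1) * ((of_real t powr v) ^ n / Gamma (v * of_nat n + (d1 + d2)))))"
    proof (intro sum.cong refl)
      fix k assume k: "k \<in> {..n}"
      have s: "\<alpha> k + \<beta> (n - k) = v * of_nat n + (d1 + d2)"
        using k by (simp add: \<alpha>_def \<beta>_def of_nat_diff algebra_simps)
      have g: "Gamma (\<alpha> k) \<noteq> 0" "Gamma (\<beta> (n - k)) \<noteq> 0" "Gamma (v * of_nat n + (d1 + d2)) \<noteq> 0"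
        using Ra[of k] Rb[of "n - k"] s[symmetric] by (auto intro!: Gamma_Re_pos_nz)
      have p: "(of_real t :: complex) powr (v * of_nat n + (d1 + d2) - 1) = of_real t powr (d1 + d2 - 1) * (of_real t powr v) ^ n"
        using t by (simp add: powr_power powr_add[symmetric] algebra_simps)
      show "coef n k * (\<integral>x. kern (\<alpha> k) (\<beta> (n - k)) t x \<partial>lborel) = a k * b (n - k) * (of_real t powr (d1 + d2 - 1) * ((of_real t powr v) ^ n / Gamma (v * of_nat n + (d1 + d2))))"
        unfolding kern_integral[OF Ra Rb t] s Beta_def coef_def p using g by (simp add: field_simps)
    qed
    also have "\<dots> = (\<Sum>k\<le>n. a k * b (n - k)) * (of_real t powr (d1 + d2 - 1) * ((of_real t powr v) ^ n / Gamma (v * of_nat n + (d1 + d2))))"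
      by (rule sum_distrib_right[symmetric])
    also have "\<dots> = of_real t powr (d1 + d2 - 1) * (cauchy a b n * (of_real t powr v) ^ n / Gamma (v * of_nat n + (d1 + d2)))"
      by (simp add: cauchy_def mult_ac)
    finally show ?thesis .
  qed
  have Hnorm: "norm (H n x) \<le> (\<Sum>k\<le>n. norm (A k (t - x)) * norm (B (n - k) x))" for n x
    unfolding H_def by (auto simp: indicator_def norm_mult intro!: order.trans[OF norm_sum] sum_nonneg)
  have sumH: "(\<lambda>n. H n x) sums (indicator {0<..<t} x *\<^sub>R (F (t - x) * G x))" for x
  proof (cases "0 < x \<and> x < t")
    case True
    have "(\<lambda>n. \<Sum>k\<le>n. A k (t - x) * B (n - k) x) sums ((\<Sum>k. A k (t - x)) * (\<Sum>k. B k x))"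
      by (rule Cauchy_product_sums) (use FA(2) GB(2) True in auto)
    thus ?thesis using True FA(1)[of "t - x"] GB(1)[of x] by (simp add: H_def indicator_def)
  next
    case False
    hence "indicator {0<..<t} x = (0::real)" by (simp add: indicator_def)
    thus ?thesis by (simp add: H_def)
  qed
  have AEsum: "AE x in lborel. summable (\<lambda>n. norm (H n x))"
  proof (intro AE_I2)
    fix x
    show "summable (\<lambda>n. norm (H n x))"
    proof (cases "0 < x \<and> x < t")
      case True
      have "summable (\<lambda>n. \<Sum>k\<le>n. norm (A k (t - x)) * norm (B (n - k) x))"
        by (rule summable_Cauchy_product) (use FA(2) GB(2) True in auto)
      thus ?thesis by (rule summable_comparison_test'[where N=0]) (use Hnorm in auto)
    next
      case False
      hence "indicator {0<..<t} x = (0::real)" by (simp add: indicator_def)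
      thus ?thesis by (simp add: H_def)
    qed
  qed
  define T where "T = t powr Re v"
  define p where "p k = norm (a k * of_real T ^ k / Gamma (v * of_nat k + d1))" for k
  define q where "q k = norm (b k * of_real T ^ k / Gamma (v * of_nat k + d2))" for k
  define C0 where "C0 = t powr (Re d1 + Re d2 - 1) * Beta (Re d1) (Re d2)"
  have C0: "C0 \<ge> 0" using d1 d2 by (simp add: C0_def Beta_def)
  have sp: "summable p" unfolding p_def by (rule ml_summable[OF ga v d1])
  have sq: "summable q" unfolding q_def by (rule ml_summable[OF gb v d2])
  have intbound: "(\<integral>x. norm (H n x) \<partial>lborel) \<le> C0 * (\<Sum>k\<le>n. p k * q (n - k))" for n
  proof -
    have "(\<integral>x. norm (H n x) \<partial>lborel) \<le> (\<integral>x. (\<Sum>k\<le>n. norm (coef n k) * norm (kern (\<alpha> k) (\<beta> (n - k)) t x)) \<partial>lborel)"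
    proof (rule integral_mono)
      show "integrable lborel (\<lambda>x. norm (H n x))" by (intro integrable_norm Hint)
      show "integrable lborel (\<lambda>x. \<Sum>k\<le>n. norm (coef n k) * norm (kern (\<alpha> k) (\<beta> (n - k)) t x))"
        by (intro Bochner_Integration.integrable_sum integrable_mult_right kern_norm(1) Ra Rb t)
      fix x
      show "norm (H n x) \<le> (\<Sum>k\<le>n. norm (coef n k) * norm (kern (\<alpha> k) (\<beta> (n - k)) t x))"
        unfolding H_alt by (rule order.trans[OF norm_sum]) (simp add: norm_mult)
    qed
    also have "\<dots> = (\<Sum>k\<le>n. norm (coef n k) * (t powr (Re (\<alpha> k) + Re (\<beta> (n - k)) - 1) * Beta (Re (\<alpha> k)) (Re (\<beta> (n - k)))))"
      by (subst Bochner_Integration.integral_sum) (auto intro!: integrable_mult_right kern_norm Ra Rb t simp: kern_norm(2)[OF Ra Rb t])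
    also have "\<dots> \<le> (\<Sum>k\<le>n. C0 * (p k * q (n - k)))"
    proof (intro sum_mono)
      fix k assume k: "k \<in> {..n}"
      have e: "Re (\<alpha> k) + Re (\<beta> (n - k)) - 1 = (Re d1 + Re d2 - 1) + Re v * real n"
        using k by (simp add: \<alpha>_def \<beta>_def of_nat_diff algebra_simps)
      have tp: "t powr (Re (\<alpha> k) + Re (\<beta> (n - k)) - 1) = t powr (Re d1 + Re d2 - 1) * (T ^ k * T ^ (n - k))"
      proof -
        have "T ^ k * T ^ (n - k) = T ^ n" using k by (simp add: power_add[symmetric])
        also have "\<dots> = t powr (real n * Re v)" unfolding T_def using t by (simp add: powr_power)
        finally show ?thesis unfolding e using t by (simp add: powr_add mult_ac)
      qed
      have bt: "Beta (Re (\<alpha> k)) (Re (\<beta> (n - k))) \<le> Beta (Re d1) (Re d2)"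
        by (rule Beta_real_mono) (use d1 d2 v in \<open>auto simp: \<alpha>_def \<beta>_def\<close>)
      have T0: "T \<ge> 0" by (simp add: T_def)
      have nc: "norm (coef n k) * (T ^ k * T ^ (n - k)) = p k * q (n - k)"
        using T0 by (simp add: coef_def p_def q_def \<alpha>_def \<beta>_def norm_mult norm_divide norm_power)
      have "norm (coef n k) * (t powr (Re (\<alpha> k) + Re (\<beta> (n - k)) - 1) * Beta (Re (\<alpha> k)) (Re (\<beta> (n - k))))
            = (norm (coef n k) * (T ^ k * T ^ (n - k))) * t powr (Re d1 + Re d2 - 1) * Beta (Re (\<alpha> k)) (Re (\<beta> (n - k)))"
        unfolding tp by (simp add: mult_ac)
      also have "\<dots> \<le> (norm (coef n k) * (T ^ k * T ^ (n - k))) * t powr (Re d1 + Re d2 - 1) * Beta (Re d1) (Re d2)"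
        using bt T0 by (intro mult_left_mono) auto
      also have "\<dots> = C0 * (p k * q (n - k))" unfolding nc C0_def by (simp add: mult_ac)
      finally show "norm (coef n k) * (t powr (Re (\<alpha> k) + Re (\<beta> (n - k)) - 1) * Beta (Re (\<alpha> k)) (Re (\<beta> (n - k)))) \<le> C0 * (p k * q (n - k))" .
    qed
    also have "\<dots> = C0 * (\<Sum>k\<le>n. p k * q (n - k))" by (simp add: sum_distrib_left)
    finally show ?thesis .
  qed
  have sumint: "summable (\<lambda>n. \<integral>x. norm (H n x) \<partial>lborel)"
  proof -
    have "summable (\<lambda>n. \<Sum>k\<le>n. p k * q (n - k))"
    proof (rule summable_Cauchy_product)
      have "(\<lambda>k. norm (p k)) = p" "(\<lambda>k. norm (q k)) = q" by (simp_all add: p_def q_def fun_eq_iff)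
      thus "summable (\<lambda>k. norm (p k))" "summable (\<lambda>k. norm (q k))" using sp sq by simp_all
    qed
    hence "summable (\<lambda>n. C0 * (\<Sum>k\<le>n. p k * q (n - k)))" by (rule summable_mult)
    thus ?thesis by (rule summable_comparison_test'[where N=0]) (use intbound in auto)
  qed
  have eqS: "(\<lambda>x. \<Sum>n. H n x) = (\<lambda>x. indicator {0<..<t} x *\<^sub>R (F (t - x) * G x))"
    using sumH by (auto simp: sums_iff)
  show "integrable lborel (\<lambda>x. indicator {0<..<t} x *\<^sub>R (F (t - x) * G x))"
    using integrable_suminf[OF Hint AEsum sumint] unfolding eqS .
  have "(\<integral>x. indicator {0<..<t} x *\<^sub>R (F (t - x) * G x) \<partial>lborel) = (\<Sum>n. \<integral>x. H n x \<partial>lborel)"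
    using integral_suminf[OF Hint AEsum sumint] unfolding eqS .
  also have "\<dots> = (\<Sum>n. of_real t powr (d1 + d2 - 1) * (cauchy a b n * (of_real t powr v) ^ n / Gamma (v * of_nat n + (d1 + d2))))"
    by (simp only: Hintegral)
  also have "\<dots> = of_real t powr (d1 + d2 - 1) * gml v (d1 + d2) (cauchy a b) t"
    unfolding gml_def
    by (rule suminf_mult, rule summable_norm_cancel, rule ml_summable[OF geom_cauchy[OF ga gb] v])
       (use d1 d2 in simp)
  finally show "(\<integral>x. indicator {0<..<t} x *\<^sub>R (F (t - x) * G x) \<partial>lborel) =
           of_real t powr (d1 + d2 - 1) * gml v (d1 + d2) (cauchy a b) t" .
qed

definition Ssum :: "(nat \<Rightarrow> complex) \<Rightarrow> nat set \<Rightarrow> nat \<Rightarrow> complex" where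
  "Ssum e A r = (\<Sum>i\<in>A. e i ^ r / (\<Prod>j\<in>A - {i}. (e i - e j)))"

lemma Ssum_rec:
  assumes A: "finite A" "c \<in> A" "inj_on e A"
  shows "Ssum e A (Suc r) = e c * Ssum e A r + Ssum e (A - {c}) r"
proof -
  have "Ssum e A (Suc r) - e c * Ssum e A r = (\<Sum>i\<in>A. e i ^ r * (e i - e c) / (\<Prod>j\<in>A - {i}. (e i - e j)))"
    unfolding Ssum_def by (simp add: sum_distrib_left sum_subtractf[symmetric] algebra_simps diff_divide_distrib)
  also have "\<dots> = e c ^ r * (e c - e c) / (\<Prod>j\<in>A - {c}. (e c - e j)) + (\<Sum>i\<in>A - {c}. e i ^ r * (e i - e c) / (\<Prod>j\<in>A - {i}. (e i - e j)))"
    using A by (subst sum.remove[of A c]) auto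
  also have "(\<Sum>i\<in>A - {c}. e i ^ r * (e i - e c) / (\<Prod>j\<in>A - {i}. (e i - e j))) = Ssum e (A - {c}) r"
    unfolding Ssum_def
  proof (intro sum.cong refl)
    fix i assume i: "i \<in> A - {c}"
    have ne: "e i - e c \<noteq> 0" using i A inj_onD[OF A(3), of i c] by auto
    have "(\<Prod>j\<in>A - {i}. (e i - e j)) = (e i - e c) * (\<Prod>j\<in>A - {i} - {c}. (e i - e j))"
      using A i by (subst prod.remove[of _ c]) auto
    also have "A - {i} - {c} = A - {c} - {i}" by auto
    finally show "e i ^ r * (e i - e c) / (\<Prod>j\<in>A - {i}. (e i - e j)) = e i ^ r / (\<Prod>j\<in>A - {c} - {i}. (e i - e j))"
      using ne by simp
  qed
  finally show ?thesis by (simp add: algebra_simps)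
qed

lemma Ssum_diff:
  assumes A: "finite A" "a \<in> A" "b \<in> A" "inj_on e A"
  shows "(e a - e b) * Ssum e A r = Ssum e (A - {b}) r - Ssum e (A - {a}) r"
  using Ssum_rec[OF A(1,2,4), of r] Ssum_rec[OF A(1,3,4), of r] by (simp add: algebra_simps)

lemma Ssum_vanish:
  "finite A \<Longrightarrow> card A = Suc n \<Longrightarrow> inj_on e A \<Longrightarrow> Ssum e A n = 1 \<and> (\<forall>r<n. Ssum e A r = 0)"
proof (induction n arbitrary: A)
  case 0
  then obtain a where "A = {a}" using card_1_singletonE by (metis One_nat_def)
  thus ?case by (simp add: Ssum_def)
next
  case (Suc m)
  obtain a b where ab: "a \<in> A" "b \<in> A" "a \<noteq> b"
  proof -
    obtain a B where AB: "A = insert a B" "a \<notin> B" "card B = Suc m"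
      using card_eq_SucD[OF Suc.prems(2)] by blast
    have "B \<noteq> {}" using AB(3) by auto
    then obtain b where "b \<in> B" by blast
    thus ?thesis using that AB by blast
  qed
  have fa: "finite (A - {a})" and fb: "finite (A - {b})" using Suc.prems(1) by auto
  have ca: "card (A - {a}) = Suc m" using Suc.prems(1,2) ab(1) by (simp add: card_Diff_singleton)
  have cb: "card (A - {b}) = Suc m" using Suc.prems(1,2) ab(2) by (simp add: card_Diff_singleton)
  have inja: "inj_on e (A - {a})" and injb: "inj_on e (A - {b})"
    by (rule inj_on_subset[OF Suc.prems(3)], blast)+
  have IHa: "Ssum e (A - {a}) m = 1" "\<And>r. r < m \<Longrightarrow> Ssum e (A - {a}) r = 0"
    using Suc.IH[OF fa ca inja] by auto
  have IHb: "Ssum e (A - {b}) m = 1" "\<And>r. r < m \<Longrightarrow> Ssum e (A - {b}) r = 0"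
    using Suc.IH[OF fb cb injb] by auto
  have ne: "e a - e b \<noteq> 0" using inj_onD[OF Suc.prems(3) _ ab(1,2)] ab(3) by auto
  have z: "Ssum e A r = 0" if "r < Suc m" for r
  proof -
    have "Ssum e (A - {b}) r = Ssum e (A - {a}) r"
    proof (cases "r < m")
      case True thus ?thesis using IHa(2) IHb(2) by simp
    next
      case False hence "r = m" using that by simp
      thus ?thesis using IHa(1) IHb(1) by simp
    qed
    hence "(e a - e b) * Ssum e A r = 0" using Ssum_diff[OF Suc.prems(1) ab(1,2) Suc.prems(3), of r] by simp
    thus ?thesis using ne by simp
  qed
  have "Ssum e A (Suc m) = e a * Ssum e A m + Ssum e (A - {a}) m"
    by (rule Ssum_rec[OF Suc.prems(1) ab(1) Suc.prems(3)])
  also have "\<dots> = 1" using z[of m] IHa(1) by simp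
  finally show ?case using z by blast
qed

fun hc :: "(nat \<Rightarrow> complex) \<Rightarrow> nat \<Rightarrow> nat \<Rightarrow> complex" where
  "hc e 0 = (\<lambda>n. 0)"
| "hc e (Suc 0) = (\<lambda>n. e 1 ^ n)"
| "hc e (Suc (Suc m)) = cauchy (hc e (Suc m)) (\<lambda>n. e (Suc (Suc m)) ^ n)"

lemma cauchy_pow_Suc:
  "cauchy h (\<lambda>n. x ^ n) (Suc n) = x * cauchy h (\<lambda>n. x ^ n) n + h (Suc n)"
proof -
  have "cauchy h (\<lambda>n. x ^ n) (Suc n) = (\<Sum>k\<le>n. h k * x ^ (Suc n - k)) + h (Suc n)"
    by (simp add: cauchy_def)
  also have "(\<Sum>k\<le>n. h k * x ^ (Suc n - k)) = x * (\<Sum>k\<le>n. h k * x ^ (n - k))"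
    by (simp add: sum_distrib_left Suc_diff_le mult_ac)
  finally show ?thesis by (simp add: cauchy_def)
qed

lemma cauchy_pow_0: "cauchy h (\<lambda>n. x ^ n) 0 = h 0"
  by (simp add: cauchy_def)

lemma hc_Ssum:
  assumes "inj_on e {1..M}"
  shows "1 \<le> m \<Longrightarrow> m \<le> M \<Longrightarrow> hc e m n = Ssum e {1..m} (n + m - 1)"
proof (induction m arbitrary: n rule: nat_induct_at_least)
  case base
  thus ?case by (simp add: Ssum_def)
next
  case (Suc m)
  have m1: "m \<ge> 1" using Suc by simp
  have IH': "hc e m n' = Ssum e {1..m} (n' + m - 1)" for n' using Suc.IH Suc.prems by simp
  have inj: "inj_on e {1..Suc m}" by (rule inj_on_subset[OF assms]) (use Suc.prems in auto)
  have injm: "inj_on e {1..m}" by (rule inj_on_subset[OF inj]) auto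
  have rm: "{1..Suc m} - {Suc m} = {1..m}" by auto
  obtain k where k: "m = Suc k" using m1 by (cases m) auto
  have rec: "hc e (Suc m) = cauchy (hc e m) (\<lambda>n. e (Suc m) ^ n)" by (simp add: k)
  show ?case
  proof (induction n)
    case 0
    have "hc e (Suc m) 0 = hc e m 0" by (simp add: rec cauchy_pow_0)
    also have "\<dots> = Ssum e {1..m} (m - 1)" using IH'[of 0] by simp
    also have "\<dots> = 1" using Ssum_vanish[of "{1..m}" "m - 1" e] m1 injm by simp
    also have "\<dots> = Ssum e {1..Suc m} m" using Ssum_vanish[of "{1..Suc m}" m e] inj by simp
    finally show ?case by simp
  next
    case (Suc n)
    have "hc e (Suc m) (Suc n) = e (Suc m) * hc e (Suc m) n + hc e m (Suc n)"
      by (simp add: rec cauchy_pow_Suc)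
    also have "\<dots> = e (Suc m) * Ssum e {1..Suc m} (n + m) + Ssum e {1..m} (n + m)"
      using Suc.IH IH'[of "Suc n"] m1 by simp
    also have "\<dots> = Ssum e {1..Suc m} (Suc (n + m))"
      using Ssum_rec[of "{1..Suc m}" "Suc m" e "n + m"] inj rm by simp
    finally show ?case by simp
  qed
qed

lemma conv_gml_HK:
  assumes v: "Re v > 0" and d1: "Re d1 > 0" and d2: "Re d2 > 0"
    and ga: "geom a" and gb: "geom b" and t: "t > 0"
    and f: "\<And>x. 0 \<le> x \<Longrightarrow> x \<le> t \<Longrightarrow> f x = of_real x powr (d1 - 1) * gml v d1 a x"
    and g: "\<And>x. 0 \<le> x \<Longrightarrow> x \<le> t \<Longrightarrow> g x = of_real x powr (d2 - 1) * gml v d2 b x"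
  shows "conv f g t = of_real t powr (d1 + d2 - 1) * gml v (d1 + d2) (cauchy a b) t"
proof -
  define F where "F = (\<lambda>x. of_real x powr (d1 - 1) * gml v d1 a x)"
  define G where "G = (\<lambda>x. of_real x powr (d2 - 1) * gml v d2 b x)"
  note cg = conv_gml[OF v d1 d2 ga gb t]
  have "conv f g t = integral {0<..<t} (\<lambda>x. f (t - x) * g x)"
    unfolding conv_def by (rule integral_open_interval_real)
  also have "\<dots> = integral {0<..<t} (\<lambda>x. F (t - x) * G x)"
    by (rule integral_cong) (use f g in \<open>auto simp: F_def G_def\<close>)
  also have "\<dots> = (LINT x:{0<..<t}|lborel. F (t - x) * G x)"
    by (rule set_borel_integral_eq_integral(2)[symmetric]) (unfold set_integrable_def F_def G_def, rule cg(1))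
  also have "\<dots> = of_real t powr (d1 + d2 - 1) * gml v (d1 + d2) (cauchy a b) t"
    unfolding set_lebesgue_integral_def F_def G_def by (rule cg(2))
  finally show ?thesis .
qed

lemma conv_iter_gml:
  fixes v :: complex and \<delta> e :: "nat \<Rightarrow> complex"
  assumes v: "Re v > 0" and dpos: "\<And>i. i \<in> {1..M} \<Longrightarrow> Re (\<delta> i) > 0"
  defines "F \<equiv> \<lambda>i x. of_real x powr (\<delta> i - 1) * mittag_leffler v (\<delta> i) (e i * of_real x powr v)"
  shows "1 \<le> m \<Longrightarrow> m \<le> M \<Longrightarrow>
     (\<forall>t\<ge>0. conv_iter F m t = of_real t powr ((\<Sum>h=1..m. \<delta> h) - 1) * gml v (\<Sum>h=1..m. \<delta> h) (hc e m) t)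
     \<and> geom (hc e m) \<and> Re (\<Sum>h=1..m. \<delta> h) > 0"
proof (induction m rule: nat_induct_at_least)
  case base
  have "conv_iter F 1 t = of_real t powr (\<delta> 1 - 1) * gml v (\<delta> 1) (hc e 1) t" for t
    by (simp add: F_def mittag_leffler_gml)
  moreover have "geom (hc e 1)" by (simp add: geom_pow)
  moreover have "Re (\<delta> 1) > 0" using dpos base by simp
  ultimately show ?case by simp
next
  case (Suc m)
  have m1: "m \<ge> 1" using Suc by simp
  obtain k where k: "m = Suc k" using m1 by (cases m) auto
  from Suc.IH Suc.prems have IH: "\<And>t. t \<ge> 0 \<Longrightarrow> conv_iter F m t = of_real t powr ((\<Sum>h=1..m. \<delta> h) - 1) * gml v (\<Sum>h=1..m. \<delta> h) (hc e m) t"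
    and gm: "geom (hc e m)" and dm: "Re (\<Sum>h=1..m. \<delta> h) > 0" by auto
  have ds: "Re (\<delta> (Suc m)) > 0" using dpos Suc.prems by simp
  have sumS: "(\<Sum>h=1..Suc m. \<delta> h) = (\<Sum>h=1..m. \<delta> h) + \<delta> (Suc m)" by simp
  have crec: "conv_iter F (Suc m) = conv (conv_iter F m) (F (Suc m))" by (simp add: k)
  have hrec: "hc e (Suc m) = cauchy (hc e m) (\<lambda>n. e (Suc m) ^ n)" by (simp add: k)
  have gS: "geom (hc e (Suc m))" unfolding hrec by (intro geom_cauchy gm geom_pow)
  have "conv_iter F (Suc m) t = of_real t powr ((\<Sum>h=1..Suc m. \<delta> h) - 1) * gml v (\<Sum>h=1..Suc m. \<delta> h) (hc e (Suc m)) t"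
    if t: "t \<ge> 0" for t
  proof (cases "t = 0")
    case True
    thus ?thesis by (simp add: crec conv_def)
  next
    case False
    hence t: "t > 0" using t by simp
    show ?thesis unfolding crec hrec sumS
    proof (rule conv_gml_HK[OF v dm ds gm geom_pow t])
      fix x :: real assume x: "0 \<le> x" "x \<le> t"
      show "conv_iter F m x = of_real x powr ((\<Sum>h=1..m. \<delta> h) - 1) * gml v (\<Sum>h=1..m. \<delta> h) (hc e m) x"
        by (rule IH[OF x(1)])
    next
      fix x :: real
      show "F (Suc m) x = of_real x powr (\<delta> (Suc m) - 1) * gml v (\<delta> (Suc m)) (\<lambda>n. e (Suc m) ^ n) x"
        by (simp add: F_def mittag_leffler_gml)
    qed
  qed
  moreover have "Re (\<Sum>h=1..Suc m. \<delta> h) > 0" unfolding sumS using dm ds by simp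
  ultimately show ?case using gS by auto
qed

lemma ml_summable_pow:
  assumes "Re v > 0" "Re d > 0"
  shows "summable (\<lambda>n. (e * z) ^ n / Gamma (v * of_nat n + d))"
proof -
  have "summable (\<lambda>n. norm (e ^ n * z ^ n / Gamma (v * of_nat n + d)))"
    by (rule ml_summable[OF geom_pow assms])
  hence "summable (\<lambda>n. e ^ n * z ^ n / Gamma (v * of_nat n + d))" by (rule summable_norm_cancel)
  thus ?thesis by (simp add: power_mult_distrib)
qed

theorem proposition2p1:
  fixes M :: nat and t :: real and \<nu> :: complex
    and \<delta> \<eta> :: "nat \<Rightarrow> complex"
  assumes "M \<ge> 1" and "t \<ge> 0"
    and "\<nu> \<noteq> 0" and "Re \<nu> > 0"
    and "\<And>i. i \<in> {1..M} \<Longrightarrow> \<delta> i \<noteq> 0 \<and> Re (\<delta> i) > 0"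
    and "inj_on \<eta> {1..M}"
  shows "conv_iter (\<lambda>i x. of_real x powr (\<delta> i - 1) * mittag_leffler \<nu> (\<delta> i) (\<eta> i * of_real x powr \<nu>)) M t
       = of_real t powr ((\<Sum>h=1..M. \<delta> h) - 1) *
         (\<Sum>i=1..M. \<eta> i ^ (M - 1) / (\<Prod>j\<in>{1..M} - {i}. (\<eta> i - \<eta> j))
            * mittag_leffler \<nu> (\<Sum>h=1..M. \<delta> h) (\<eta> i * of_real t powr \<nu>))"
proof -
  define D where "D = (\<Sum>h=1..M. \<delta> h)"
  define z where "z = (of_real t powr \<nu> :: complex)"
  define P where "P i = (\<Prod>j\<in>{1..M} - {i}. (\<eta> i - \<eta> j))" for i
  have dpos: "\<And>i. i \<in> {1..M} \<Longrightarrow> Re (\<delta> i) > 0" using assms(5) by auto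
  note CI = conv_iter_gml[where M=M and e=\<eta> and \<delta>=\<delta> and v=\<nu>, OF assms(4) dpos assms(1) order.refl]
  have D: "Re D > 0" using CI by (simp add: D_def)
  have lhs: "conv_iter (\<lambda>i x. of_real x powr (\<delta> i - 1) * mittag_leffler \<nu> (\<delta> i) (\<eta> i * of_real x powr \<nu>)) M t
        = of_real t powr (D - 1) * gml \<nu> D (hc \<eta> M) t"
    using CI assms(2) by (simp add: D_def)
  have "gml \<nu> D (hc \<eta> M) t = (\<Sum>n. \<Sum>i\<in>{1..M}. \<eta> i ^ (M - 1) / P i * ((\<eta> i * z) ^ n / Gamma (\<nu> * of_nat n + D)))"
    unfolding gml_def z_def[symmetric]
  proof (intro suminf_cong)
    fix n
    have "hc \<eta> M n = Ssum \<eta> {1..M} (n + M - 1)" by (rule hc_Ssum[OF assms(6) assms(1) order.refl])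
    also have "\<dots> = (\<Sum>i\<in>{1..M}. \<eta> i ^ (M - 1) / P i * \<eta> i ^ n)"
      unfolding Ssum_def P_def
    proof (intro sum.cong refl)
      fix i
      have "n + M - 1 = (M - 1) + n" using assms(1) by simp
      thus "\<eta> i ^ (n + M - 1) / (\<Prod>j\<in>{1..M} - {i}. (\<eta> i - \<eta> j)) = \<eta> i ^ (M - 1) / (\<Prod>j\<in>{1..M} - {i}. (\<eta> i - \<eta> j)) * \<eta> i ^ n"
        by (simp add: power_add)
    qed
    finally have h: "hc \<eta> M n = (\<Sum>i\<in>{1..M}. \<eta> i ^ (M - 1) / P i * \<eta> i ^ n)" .
    have "hc \<eta> M n * z ^ n / Gamma (\<nu> * of_nat n + D) = (\<Sum>i\<in>{1..M}. \<eta> i ^ (M - 1) / P i * \<eta> i ^ n) * (z ^ n / Gamma (\<nu> * of_nat n + D))"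
      unfolding h by simp
    also have "\<dots> = (\<Sum>i\<in>{1..M}. (\<eta> i ^ (M - 1) / P i * \<eta> i ^ n) * (z ^ n / Gamma (\<nu> * of_nat n + D)))"
      by (rule sum_distrib_right)
    also have "\<dots> = (\<Sum>i\<in>{1..M}. \<eta> i ^ (M - 1) / P i * ((\<eta> i * z) ^ n / Gamma (\<nu> * of_nat n + D)))"
      by (intro sum.cong refl) (simp add: power_mult_distrib)
    finally show "hc \<eta> M n * z ^ n / Gamma (\<nu> * of_nat n + D) = (\<Sum>i\<in>{1..M}. \<eta> i ^ (M - 1) / P i * ((\<eta> i * z) ^ n / Gamma (\<nu> * of_nat n + D)))" .
  qed
  also have "\<dots> = (\<Sum>i\<in>{1..M}. \<Sum>n. \<eta> i ^ (M - 1) / P i * ((\<eta> i * z) ^ n / Gamma (\<nu> * of_nat n + D)))"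
    by (rule suminf_sum) (intro summable_mult ml_summable_pow assms(4) D)
  also have "\<dots> = (\<Sum>i\<in>{1..M}. \<eta> i ^ (M - 1) / P i * mittag_leffler \<nu> D (\<eta> i * z))"
  proof (intro sum.cong refl)
    fix i
    show "(\<Sum>n. \<eta> i ^ (M - 1) / P i * ((\<eta> i * z) ^ n / Gamma (\<nu> * of_nat n + D))) = \<eta> i ^ (M - 1) / P i * mittag_leffler \<nu> D (\<eta> i * z)"
      unfolding mittag_leffler_def by (rule suminf_mult) (rule ml_summable_pow[OF assms(4) D])
  qed
  finally show ?thesis unfolding lhs by (simp add: D_def z_def P_def)
qed

end
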